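(* Let $n,m\in\mathbb{N}$ and $g\in C^2[0,1]$. With $I_{n,m}(g)=\frac{1}{m(n+1)}\sum_{k=1}^m\sum_{i=0}^n g\left(\frac{kn-n+i}{mn}\right)$, $$ \left|\int_0^1g(x)\,dx-I_{n,m}(g)\right|\le\frac{1}{12m^2n}\|g''\|_\infty. $$
   Context: $I_{n,m}(g)$ equals $\int_0^1\overline{B}_{n,m}(g;x)\,dx$, where $\overline{B}_{n,m}(g;x)=B_n^{[\frac{k-1}{m},\frac km]}(g;x)$ on $\left[\frac{k-1}{m},\frac km\right]$ and $B_n^{[a,b]}(g;x)=\frac{1}{(b-a)^n}\sum_{i=0}^n\binom ni(x-a)^i(b-x)^{n-i}g(a+i\frac{b-a}{n})$. $\|\cdot\|_\infty$ is the sup norm on $[0,1]$. *)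

theory Defs
  imports "HOL-Analysis.Analysis"
begin

definition C2_on_unit :: "(real \<Rightarrow> real) \<Rightarrow> (real \<Rightarrow> real) \<Rightarrow> (real \<Rightarrow> real) \<Rightarrow> bool" where
  "C2_on_unit g g1 g2 \<longleftrightarrow>
     (\<forall>x\<in>{0..1}. (g has_real_derivative g1 x) (at x within {0..1})) \<and>
     (\<forall>x\<in>{0..1}. (g1 has_real_derivative g2 x) (at x within {0..1})) \<and>
     continuous_on {0..1} g2"

definition sup_norm01 :: "(real \<Rightarrow> real) \<Rightarrow> real" where
  "sup_norm01 f = (SUP x\<in>{0..1}. \<bar>f x\<bar>)"

definition I_nm :: "nat \<Rightarrow> nat \<Rightarrow> (real \<Rightarrow> real) \<Rightarrow> real" where
  "I_nm n m g = 1 / (real m * (real n + 1)) *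
     (\<Sum>k=1..m. \<Sum>i=0..n. g ((real k * real n - real n + real i) / (real m * real n)))"

end

theory Submission
  imports Defs
begin

lemma mvt_field:
  fixes f f' :: "real \<Rightarrow> real"
  assumes "a \<le> b" "\<And>x. x \<in> {a..b} \<Longrightarrow> (f has_field_derivative f' x) (at x within {a..b})"
  shows "\<exists>x\<in>{a..b}. f b - f a = f' x * (b - a)"
proof -
  have "\<exists>x\<in>{a..b}. f b - f a = (\<lambda>x h. f' x * h) x (b - a)"
    by (rule mvt_very_simple[OF assms(1)])
       (use assms(2) in \<open>auto simp: has_field_derivative_def\<close>)
  then show ?thesis by simp
qed

lemma deriv_mono01:
  fixes f' f'' :: "real \<Rightarrow> real"
  assumes d2: "\<And>x. x \<in> {0..1} \<Longrightarrow> (f' has_field_derivative f'' x) (at x within {0..1})"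
    and pos: "\<And>x. x \<in> {0..1} \<Longrightarrow> f'' x \<ge> 0"
    and "0 \<le> u" "u \<le> v" "v \<le> 1"
  shows "f' u \<le> f' v"
proof -
  have "\<exists>x\<in>{u..v}. f' v - f' u = f'' x * (v - u)"
    by (rule mvt_field) (use assms in \<open>auto intro: DERIV_subset[OF d2]\<close>)
  then obtain x where "x \<in> {u..v}" "f' v - f' u = f'' x * (v - u)" by blast
  moreover have "f'' x \<ge> 0" using pos \<open>x \<in> {u..v}\<close> assms by auto
  ultimately show ?thesis using assms by (smt (verit) mult_nonneg_nonneg)
qed

lemma chord01:
  fixes f f' f'' :: "real \<Rightarrow> real"
  assumes d1: "\<And>x. x \<in> {0..1} \<Longrightarrow> (f has_field_derivative f' x) (at x within {0..1})"
    and d2: "\<And>x. x \<in> {0..1} \<Longrightarrow> (f' has_field_derivative f'' x) (at x within {0..1})"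
    and pos: "\<And>x. x \<in> {0..1} \<Longrightarrow> f'' x \<ge> 0"
    and "0 \<le> c" "c \<le> x" "x \<le> d" "d \<le> 1"
  shows "(d - c) * f x \<le> (d - x) * f c + (x - c) * f d"
proof -
  have "\<exists>y\<in>{c..x}. f x - f c = f' y * (x - c)"
    by (rule mvt_field) (use assms in \<open>auto intro: DERIV_subset[OF d1]\<close>)
  then obtain y1 where y1: "y1 \<in> {c..x}" "f x - f c = f' y1 * (x - c)" by blast
  have "\<exists>y\<in>{x..d}. f d - f x = f' y * (d - x)"
    by (rule mvt_field) (use assms in \<open>auto intro: DERIV_subset[OF d1]\<close>)
  then obtain y2 where y2: "y2 \<in> {x..d}" "f d - f x = f' y2 * (d - x)" by blast
  have "f' y1 \<le> f' y2" by (rule deriv_mono01[OF d2 pos]) (use assms y1 y2 in auto)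
  then have "f' y1 * ((x - c) * (d - x)) \<le> f' y2 * ((x - c) * (d - x))"
    using assms by (intro mult_right_mono) auto
  moreover have "(f x - f c) * (d - x) = f' y1 * ((x - c) * (d - x))" using y1 by simp
  moreover have "(f d - f x) * (x - c) = f' y2 * ((x - c) * (d - x))" using y2 by simp
  ultimately have "(f x - f c) * (d - x) \<le> (f d - f x) * (x - c)" by linarith
  then show ?thesis by (simp add: algebra_simps)
qed

lemma trap:
  fixes f :: "real \<Rightarrow> real"
  assumes "c \<le> d" and cont: "continuous_on {c..d} f"
    and ch: "\<And>x. c \<le> x \<Longrightarrow> x \<le> d \<Longrightarrow> (d - c) * f x \<le> (d - x) * f c + (x - c) * f d"
  shows "integral {c..d} f \<le> (d - c) * (f c + f d) / 2"
proof (cases "c = d")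
  case True then show ?thesis by simp
next
  case False
  with assms have cd: "c < d" by simp
  define L where "L x = ((d - x) * f c + (x - c) * f d) / (d - c)" for x
  define K where "K = 1 / (2 * (d - c))"
  define A where "A x = ((x - c)^2 * f d - (d - x)^2 * f c) * K" for x
  have der: "(A has_vector_derivative L x) (at x within {c..d})" for x
  proof -
    have "(A has_real_derivative ((2 * (x - c) * f d + 2 * (d - x) * f c) * K)) (at x within {c..d})"
      unfolding A_def by (auto intro!: derivative_eq_intros simp: power2_eq_square algebra_simps)
    moreover have "(2 * (x - c) * f d + 2 * (d - x) * f c) * K = L x"
      unfolding L_def K_def using cd by (simp add: field_simps)
    ultimately show ?thesis by (simp add: has_real_derivative_iff_has_vector_derivative)
  qed
  have "(L has_integral (A d - A c)) {c..d}"
    by (rule fundamental_theorem_of_calculus[OF \<open>c \<le> d\<close>]) (use der in auto)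
  moreover have "A d - A c = (d - c) * (f c + f d) / 2"
  proof -
    have "A d - A c = (d - c)^2 * (f c + f d) * K" unfolding A_def by (simp add: algebra_simps)
    also have "\<dots> = (d - c) * (f c + f d) / 2" unfolding K_def using cd by (simp add: power2_eq_square field_simps)
    finally show ?thesis .
  qed
  ultimately have iL: "(L has_integral ((d - c) * (f c + f d) / 2)) {c..d}" by simp
  have "integral {c..d} f \<le> integral {c..d} L"
  proof (rule integral_le)
    show "f integrable_on {c..d}" using cont by (rule integrable_continuous_real)
    show "L integrable_on {c..d}" using iL by blast
    fix x assume "x \<in> {c..d}"
    then show "f x \<le> L x" unfolding L_def using ch[of x] cd by (simp add: field_simps)
  qed
  then show ?thesis using iL by (simp add: integral_unique)
qed

lemma partition_int:
  fixes f :: "real \<Rightarrow> real"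
  assumes "h \<ge> 0" and cont: "continuous_on {a..a + real N * h} f"
  shows "integral {a..a + real N * h} f = (\<Sum>j<N. integral {a + real j * h..a + real (Suc j) * h} f)"
  using cont
proof (induction N)
  case 0 then show ?case by simp
next
  case (Suc N)
  have NS: "real N * h \<le> real (Suc N) * h" using \<open>h \<ge> 0\<close> by (intro mult_right_mono) auto
  then have sub: "{a..a + real N * h} \<subseteq> {a..a + real (Suc N) * h}" by auto
  have "integral {a..a + real N * h} f + integral {a + real N * h..a + real (Suc N) * h} f
        = integral {a..a + real (Suc N) * h} f"
    by (rule Henstock_Kurzweil_Integration.integral_combine) (use \<open>h \<ge> 0\<close> NS Suc.prems in \<open>auto intro: integrable_continuous_real\<close>)
  moreover have "integral {a..a + real N * h} f = (\<Sum>j<N. integral {a + real j * h..a + real (Suc j) * h} f)"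
    using Suc.IH Suc.prems continuous_on_subset[OF _ sub] by blast
  ultimately show ?case by simp
qed

lemma sum_id_real: "(\<Sum>i=0..n. real i) = real n * (real n + 1) / 2"
  by (induction n) (auto simp: field_simps)

lemma sum_sq_real: "(\<Sum>i=0..n. (real i)^2) = real n * (real n + 1) * (2 * real n + 1) / 6"
  by (induction n) (auto simp: field_simps power2_eq_square)

lemma quad_convex:
  fixes f :: "real \<Rightarrow> real"
  assumes "a < b" "n \<ge> 1" and cont: "continuous_on {a..b} f"
    and ch: "\<And>c x d. a \<le> c \<Longrightarrow> c \<le> x \<Longrightarrow> x \<le> d \<Longrightarrow> d \<le> b \<Longrightarrow>
               (d - c) * f x \<le> (d - x) * f c + (x - c) * f d"
  shows "integral {a..b} f \<le> (b - a) / (real n + 1) * (\<Sum>i=0..n. f (a + real i * (b - a) / real n))"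
proof -
  define h where "h = (b - a) / real n"
  define x where "x i = a + real i * h" for i
  have hpos: "h > 0" unfolding h_def using assms by simp
  have bn: "a + real n * h = b" unfolding h_def using assms by simp
  have xs: "a + real i * (b - a) / real n = x i" for i unfolding x_def h_def by simp
  define S where "S = (\<Sum>i=0..n. f (x i))"
  have "integral {a..b} f = (\<Sum>j<n. integral {x j..x (Suc j)} f)"
    using partition_int[of h a n f] hpos cont bn unfolding x_def by simp
  also have "\<dots> \<le> (\<Sum>j<n. h * (f (x j) + f (x (Suc j))) / 2)"
  proof (rule sum_mono)
    fix j assume j: "j \<in> {..<n}"
    have le: "a \<le> x j" "x j \<le> x (Suc j)" "x (Suc j) \<le> b"
      using j hpos bn unfolding x_def by (auto intro!: mult_right_mono simp del: of_nat_Suc)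
    have "x (Suc j) - x j = h" unfolding x_def by (simp add: algebra_simps)
    moreover have "integral {x j..x (Suc j)} f \<le> (x (Suc j) - x j) * (f (x j) + f (x (Suc j))) / 2"
      by (rule trap) (use le in \<open>auto intro: continuous_on_subset[OF cont] ch\<close>)
    ultimately show "integral {x j..x (Suc j)} f \<le> h * (f (x j) + f (x (Suc j))) / 2" by simp
  qed
  also have "\<dots> = (\<Sum>j<n. h / 2 * f (x j) + h / 2 * f (x (Suc j)))"
    by (rule sum.cong) (auto simp: field_simps)
  also have "\<dots> = h / 2 * ((\<Sum>j<n. f (x j)) + (\<Sum>j<n. f (x (Suc j))))"
    by (simp add: sum.distrib sum_distrib_left distrib_left)
  also have "(\<Sum>j<n. f (x j)) = S - f (x n)"
    unfolding S_def using assms by (simp add: atLeast0AtMost lessThan_Suc_atMost[symmetric])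
  also have "(\<Sum>j<n. f (x (Suc j))) = S - f (x 0)"
  proof -
    have "(\<Sum>i<Suc n. f (x i)) = f (x 0) + (\<Sum>j<n. f (x (Suc j)))" by (rule sum.lessThan_Suc_shift)
    then show ?thesis unfolding S_def by (simp add: atLeast0AtMost lessThan_Suc_atMost)
  qed
  finally have I: "integral {a..b} f \<le> h / 2 * (2 * S - f (x 0) - f (x n))" by (simp add: algebra_simps)
  have pt: "real n * f (x i) \<le> (real n - real i) * f (x 0) + real i * f (x n)" if "i \<le> n" for i
  proof -
    have "(x n - x 0) * f (x i) \<le> (x n - x i) * f (x 0) + (x i - x 0) * f (x n)"
      using ch[of "x 0" "x i" "x n"] that hpos bn unfolding x_def
      by (auto intro!: mult_right_mono)
    moreover have "x n - x 0 = real n * h" "x n - x i = (real n - real i) * h" "x i - x 0 = real i * h"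
      unfolding x_def by (auto simp: algebra_simps)
    ultimately have "h * (real n * f (x i)) \<le> h * ((real n - real i) * f (x 0) + real i * f (x n))"
      by (simp add: algebra_simps)
    then show ?thesis using hpos by simp
  qed
  have "real n * S \<le> (\<Sum>i=0..n. (real n - real i) * f (x 0) + real i * f (x n))"
    unfolding S_def sum_distrib_left by (rule sum_mono) (use pt in auto)
  also have "\<dots> = (real n * (real n + 1) - real n * (real n + 1) / 2) * f (x 0) + real n * (real n + 1) / 2 * f (x n)"
    by (simp add: sum.distrib sum_subtractf sum_distrib_right[symmetric] sum_id_real)
  also have "\<dots> = real n * ((real n + 1) / 2 * (f (x 0) + f (x n)))"
    by (simp add: field_simps)
  finally have "real n * S \<le> real n * ((real n + 1) / 2 * (f (x 0) + f (x n)))" .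
  then have S: "S \<le> (real n + 1) / 2 * (f (x 0) + f (x n))" using assms by simp
  have "h / 2 * (2 * S - f (x 0) - f (x n)) \<le> (b - a) / (real n + 1) * S"
  proof -
    have "(b - a) / (real n + 1) * S - h / 2 * (2 * S - f (x 0) - f (x n))
          = h * ((f (x 0) + f (x n)) / 2 - S / (real n + 1))"
      unfolding h_def using assms by (simp add: field_simps)
    also have "\<dots> \<ge> 0" using S hpos by (intro mult_nonneg_nonneg) (auto simp: field_simps)
    finally show ?thesis by simp
  qed
  with I have "integral {a..b} f \<le> (b - a) / (real n + 1) * S" by linarith
  then show ?thesis unfolding S_def by (simp add: xs)
qed

lemma quad_sq:
  fixes a b :: real
  assumes "n \<ge> 1"
  shows "(b - a) / (real n + 1) * (\<Sum>i=0..n. (a + real i * (b - a) / real n)^2)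
         = (b^3 - a^3) / 3 + (b - a)^3 / (6 * real n)"
proof -
  define h where "h = (b - a) / real n"
  have b: "b = a + real n * h" unfolding h_def using assms by simp
  have "(\<Sum>i=0..n. (a + real i * (b - a) / real n)^2)
        = (\<Sum>i=0..n. a^2 + (2 * a * h) * real i + h^2 * (real i)^2)"
    by (rule sum.cong) (auto simp: h_def power2_eq_square algebra_simps)
  also have "\<dots> = (real n + 1) * a^2 + (2 * a * h) * (\<Sum>i=0..n. real i) + h^2 * (\<Sum>i=0..n. (real i)^2)"
    by (simp add: sum.distrib sum_distrib_left)
  also have "\<dots> = (real n + 1) * a^2 + (2 * a * h) * (real n * (real n + 1) / 2)
                 + h^2 * (real n * (real n + 1) * (2 * real n + 1) / 6)"
    by (simp add: sum_id_real sum_sq_real)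
  finally have e0: "(\<Sum>i=0..n. (a + real i * (b - a) / real n)^2) = (real n + 1) * a^2 + (2 * a * h) * (real n * (real n + 1) / 2)
                 + h^2 * (real n * (real n + 1) * (2 * real n + 1) / 6)" .
  have f: "(b - a) / (real n + 1) * ((real n + 1) * a^2 + (2 * a * h) * (real n * (real n + 1) / 2)
                 + h^2 * (real n * (real n + 1) * (2 * real n + 1) / 6))
        = (b^3 - a^3) / 3 + (b - a)^3 / (6 * real n)"
    unfolding b using assms by (simp add: field_simps power2_eq_square power3_eq_cube)
  show ?thesis unfolding e0 f ..
qed

lemma one_side:
  fixes g g1 g2 :: "real \<Rightarrow> real" and s M :: real
  assumes d1: "\<And>x. x \<in> {0..1} \<Longrightarrow> (g has_field_derivative g1 x) (at x within {0..1})"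
    and d2: "\<And>x. x \<in> {0..1} \<Longrightarrow> (g1 has_field_derivative g2 x) (at x within {0..1})"
    and bd: "\<And>x. x \<in> {0..1} \<Longrightarrow> \<bar>g2 x\<bar> \<le> M"
    and s: "\<bar>s\<bar> \<le> 1"
    and ab: "0 \<le> a" "a < b" "b \<le> 1" and n: "n \<ge> 1"
  shows "s * (integral {a..b} g - (b - a) / (real n + 1) * (\<Sum>i=0..n. g (a + real i * (b - a) / real n)))
         \<le> M * (b - a)^3 / (12 * real n)"
proof -
  define p where "p x = M / 2 * x^2 + s * g x" for x
  define Q where "Q f = (b - a) / (real n + 1) * (\<Sum>i=0..n. f (a + real i * (b - a) / real n))" for f :: "real \<Rightarrow> real"
  have contg: "continuous_on {0..1} g" by (rule DERIV_continuous_on[OF d1])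
  have sub: "{a..b} \<subseteq> {0..1}" using ab by auto
  have contg': "continuous_on {a..b} g" using continuous_on_subset[OF contg sub] .
  have dp1: "(p has_field_derivative (M * x + s * g1 x)) (at x within {0..1})" if "x \<in> {0..1}" for x
    unfolding p_def by (auto intro!: derivative_eq_intros d1 that simp: power2_eq_square)
  have dp2: "((\<lambda>x. M * x + s * g1 x) has_field_derivative (M + s * g2 x)) (at x within {0..1})" if "x \<in> {0..1}" for x
    by (auto intro!: derivative_eq_intros d2 that)
  have pos: "M + s * g2 x \<ge> 0" if "x \<in> {0..1}" for x
  proof -
    have "\<bar>s * g2 x\<bar> \<le> 1 * M" unfolding abs_mult using bd[OF that] s
      by (intro mult_mono) auto
    then show ?thesis by linarith
  qed
  have "integral {a..b} p \<le> Q p"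
    unfolding Q_def
  proof (rule quad_convex[OF \<open>a < b\<close> n])
    show "continuous_on {a..b} p" unfolding p_def by (intro continuous_intros contg')
    fix c x d assume "a \<le> c" "c \<le> x" "x \<le> d" "d \<le> b"
    then show "(d - c) * p x \<le> (d - x) * p c + (x - c) * p d"
      using ab by (intro chord01[OF dp1 dp2 pos]) auto
  qed
  moreover have "integral {a..b} p = M / 2 * ((b^3 - a^3) / 3) + s * integral {a..b} g"
  proof -
    have "((\<lambda>x. x^3 / 3) has_vector_derivative x^2) (at x within {a..b})" for x
      unfolding has_real_derivative_iff_has_vector_derivative[symmetric]
      by (auto intro!: derivative_eq_intros simp: power2_eq_square)
    then have "((\<lambda>x. x^2) has_integral (b^3 / 3 - a^3 / 3)) {a..b}"
      using ab by (intro fundamental_theorem_of_calculus) auto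
    then have i1: "((\<lambda>x. M / 2 * x^2) has_integral (M / 2 * ((b^3 - a^3) / 3))) {a..b}"
      by (auto dest: has_integral_mult_right[where c="M/2"] simp: diff_divide_distrib)
    have i2: "((\<lambda>x. s * g x) has_integral (s * integral {a..b} g)) {a..b}"
      by (intro has_integral_mult_right integrable_integral integrable_continuous_real contg')
    show ?thesis unfolding p_def by (rule integral_unique, rule has_integral_add[OF i1 i2])
  qed
  moreover have "Q p = M / 2 * ((b^3 - a^3) / 3 + (b - a)^3 / (6 * real n)) + s * Q g"
  proof -
    have "(\<Sum>i=0..n. p (a + real i * (b - a) / real n))
          = M / 2 * (\<Sum>i=0..n. (a + real i * (b - a) / real n)^2) + s * (\<Sum>i=0..n. g (a + real i * (b - a) / real n))"
      unfolding p_def by (simp add: sum.distrib sum_distrib_left)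
    then have "Q p = M / 2 * Q (\<lambda>x. x^2) + s * Q g"
      unfolding Q_def by (simp add: distrib_left mult_ac)
    also have "Q (\<lambda>x. x^2) = (b^3 - a^3) / 3 + (b - a)^3 / (6 * real n)"
      unfolding Q_def by (rule quad_sq[OF n])
    finally show ?thesis .
  qed
  ultimately have "s * integral {a..b} g - s * Q g \<le> M / 2 * ((b - a)^3 / (6 * real n))"
    by (simp add: algebra_simps)
  then show ?thesis unfolding Q_def by (simp add: algebra_simps)
qed

theorem mainTheorem5:
  fixes n m :: nat and g g1 g2 :: "real \<Rightarrow> real"
  assumes "n \<ge> 1" and "m \<ge> 1"
    and "C2_on_unit g g1 g2"
  shows "\<bar>integral {0..1} g - I_nm n m g\<bar> \<le> 1 / (12 * real m ^ 2 * real n) * sup_norm01 g2"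
proof -
  note C = assms(3)[unfolded C2_on_unit_def]
  have d1: "\<And>x. x \<in> {0..1} \<Longrightarrow> (g has_field_derivative g1 x) (at x within {0..1})" using C by blast
  have d2: "\<And>x. x \<in> {0..1} \<Longrightarrow> (g1 has_field_derivative g2 x) (at x within {0..1})" using C by blast
  have c2: "continuous_on {0..1} g2" using C by blast
  define M where "M = sup_norm01 g2"
  have "compact ((\<lambda>x. \<bar>g2 x\<bar>) ` {0..1})"
    by (intro compact_continuous_image continuous_intros c2) auto
  then have bdd: "bdd_above ((\<lambda>x. \<bar>g2 x\<bar>) ` {0..1})"
    by (intro bounded_imp_bdd_above compact_imp_bounded)
  have bd: "\<bar>g2 x\<bar> \<le> M" if "x \<in> {0..1}" for x
    unfolding M_def sup_norm01_def by (rule cSUP_upper[OF that bdd])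
  define A where "A j = real j / real m" for j
  define E where "E j = integral {A j..A (Suc j)} g - (A (Suc j) - A j) / (real n + 1) *
      (\<Sum>i=0..n. g (A j + real i * (A (Suc j) - A j) / real n))" for j
  have mpos: "real m > 0" using assms by simp
  have Ej: "\<bar>E j\<bar> \<le> M * (1 / real m)^3 / (12 * real n)" if "j < m" for j
  proof -
    have ab: "0 \<le> A j" "A j < A (Suc j)" "A (Suc j) \<le> 1" "A (Suc j) - A j = 1 / real m"
      unfolding A_def using that mpos by (auto simp: field_simps)
    have "1 * E j \<le> M * (A (Suc j) - A j)^3 / (12 * real n)"
      unfolding E_def by (rule one_side[OF d1 d2 bd _ ab(1-3) assms(1)]) auto
    moreover have "(-1) * E j \<le> M * (A (Suc j) - A j)^3 / (12 * real n)"
      unfolding E_def by (rule one_side[OF d1 d2 bd _ ab(1-3) assms(1)]) auto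
    ultimately show ?thesis using ab(4) by simp
  qed
  have int: "integral {0..1} g = (\<Sum>j<m. integral {A j..A (Suc j)} g)"
  proof -
    have "continuous_on {0..0 + real m * (1 / real m)} g"
      using DERIV_continuous_on[OF d1] mpos by simp
    from partition_int[OF _ this] have "integral {0..0 + real m * (1 / real m)} g =
       (\<Sum>j<m. integral {0 + real j * (1 / real m)..0 + real (Suc j) * (1 / real m)} g)" by simp
    then show ?thesis using mpos unfolding A_def by simp
  qed
  have Iq: "I_nm n m g = (\<Sum>j<m. (A (Suc j) - A j) / (real n + 1) *
      (\<Sum>i=0..n. g (A j + real i * (A (Suc j) - A j) / real n)))"
  proof -
    have "I_nm n m g = (\<Sum>j<m. 1 / (real m * (real n + 1)) *
       (\<Sum>i=0..n. g ((real (Suc j) * real n - real n + real i) / (real m * real n))))"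
      unfolding I_nm_def sum_distrib_left by (simp add: sum.atLeast1_atMost_eq)
    also have "\<dots> = (\<Sum>j<m. (A (Suc j) - A j) / (real n + 1) *
      (\<Sum>i=0..n. g (A j + real i * (A (Suc j) - A j) / real n)))"
    proof (rule sum.cong[OF refl])
      fix j assume "j \<in> {..<m}"
      have "(real (Suc j) * real n - real n + real i) / (real m * real n) =
            A j + real i * (A (Suc j) - A j) / real n" for i
        unfolding A_def using mpos assms(1) by (simp add: field_simps)
      moreover have "1 / (real m * (real n + 1)) = (A (Suc j) - A j) / (real n + 1)"
        unfolding A_def using mpos by (simp add: field_simps)
      ultimately show "1 / (real m * (real n + 1)) *
       (\<Sum>i=0..n. g ((real (Suc j) * real n - real n + real i) / (real m * real n))) =
        (A (Suc j) - A j) / (real n + 1) * (\<Sum>i=0..n. g (A j + real i * (A (Suc j) - A j) / real n))"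
        by simp
    qed
    finally show ?thesis .
  qed
  have "integral {0..1} g - I_nm n m g = (\<Sum>j<m. E j)"
    unfolding int Iq E_def by (simp add: sum_subtractf)
  then have "\<bar>integral {0..1} g - I_nm n m g\<bar> \<le> (\<Sum>j<m. \<bar>E j\<bar>)" by simp
  also have "\<dots> \<le> (\<Sum>j<m. M * (1 / real m)^3 / (12 * real n))"
    by (rule sum_mono) (use Ej in auto)
  also have "\<dots> = 1 / (12 * real m ^ 2 * real n) * M"
    using mpos by (simp add: field_simps power2_eq_square power3_eq_cube)
  finally show ?thesis unfolding M_def .
qed

end
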